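(* Let $K_1$ and $K_2$ be flag simplicial complexes. Suppose that: (1) $L_1\subset K_1$ is a non-empty full sub-complex of $K_1$; (2) $\varphi:L_1\to K_2$ is a simplicial embedding; (3) the $1$-skeleton $\varphi(L_1)^{(1)}$ is a full sub-complex of the $1$-skeleton $K_2^{(1)}$. Then $K=K_1\sqcup_\varphi K_2$ is a flag complex. In particular, $K$ is a flag complex whenever both $L_1$ and $\varphi(L_1)$ are full sub-complexes of $K_1$ and $K_2$, respectively.
   Context: A simplicial complex is flag if every finite set of pairwise adjacent vertices spans a simplex. A sub-complex $L\subset K$ is full if every simplex of $K$ all of whose vertices lie in $L$ belongs to $L$. $K_1\sqcup_\varphi K_2$ denotes the complex obtained from the disjoint union $K_1\sqcup K_2$ by identifying each simplex $\sigma$ of $L_1$ with its image $\varphi(\sigma)$. *)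

theory Defs
  imports Main
begin

definition simplicial_complex :: "'a set set \<Rightarrow> bool" where
  "simplicial_complex K \<longleftrightarrow>
     (\<forall>\<sigma>\<in>K. finite \<sigma> \<and> \<sigma> \<noteq> {}) \<and>
     (\<forall>\<sigma>\<in>K. \<forall>\<tau>. \<tau> \<subseteq> \<sigma> \<and> \<tau> \<noteq> {} \<longrightarrow> \<tau> \<in> K)"

definition vertices :: "'a set set \<Rightarrow> 'a set" where
  "vertices K = \<Union>K"

definition flag_complex :: "'a set set \<Rightarrow> bool" where
  "flag_complex K \<longleftrightarrow> simplicial_complex K \<and>
     (\<forall>S. finite S \<and> S \<noteq> {} \<and> S \<subseteq> vertices K \<and>
          (\<forall>u\<in>S. \<forall>v\<in>S. u \<noteq> v \<longrightarrow> {u, v} \<in> K) \<longrightarrow> S \<in> K)"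

definition subcomplex :: "'a set set \<Rightarrow> 'a set set \<Rightarrow> bool" where
  "subcomplex L K \<longleftrightarrow> simplicial_complex L \<and> L \<subseteq> K"

definition full_subcomplex :: "'a set set \<Rightarrow> 'a set set \<Rightarrow> bool" where
  "full_subcomplex L K \<longleftrightarrow> subcomplex L K \<and> (\<forall>\<sigma>\<in>K. \<sigma> \<subseteq> vertices L \<longrightarrow> \<sigma> \<in> L)"

definition simplicial_embedding :: "('a \<Rightarrow> 'b) \<Rightarrow> 'a set set \<Rightarrow> 'b set set \<Rightarrow> bool" where
  "simplicial_embedding \<phi> L K \<longleftrightarrow> inj_on \<phi> (vertices L) \<and> (\<forall>\<sigma>\<in>L. \<phi> ` \<sigma> \<in> K)"

definition cimage :: "('a \<Rightarrow> 'b) \<Rightarrow> 'a set set \<Rightarrow> 'b set set" where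
  "cimage \<phi> L = (\<lambda>\<sigma>. \<phi> ` \<sigma>) ` L"

definition skeleton1 :: "'a set set \<Rightarrow> 'a set set" where
  "skeleton1 K = {\<sigma>\<in>K. card \<sigma> \<le> 2}"

text \<open>Gluing K1 \<sqcup>_\<phi> K2, realised on the vertex type 'a + 'b: a vertex Inl v with
v a vertex of L1 is identified with (represented by) Inr (\<phi> v).\<close>
definition glue_map :: "'a set set \<Rightarrow> ('a \<Rightarrow> 'b) \<Rightarrow> 'a + 'b \<Rightarrow> 'a + 'b" where
  "glue_map L1 \<phi> x = (case x of Inl v \<Rightarrow> (if v \<in> vertices L1 then Inr (\<phi> v) else Inl v)
                                | Inr w \<Rightarrow> Inr w)"

definition glue :: "'a set set \<Rightarrow> 'a set set \<Rightarrow> ('a \<Rightarrow> 'b) \<Rightarrow> 'b set set \<Rightarrow> ('a + 'b) set set" where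
  "glue K1 L1 \<phi> K2 =
     (\<lambda>\<sigma>. glue_map L1 \<phi> ` Inl ` \<sigma>) ` K1 \<union> (\<lambda>\<tau>. Inr ` \<tau>) ` K2"

end

theory Submission
  imports Defs
begin

lemma glue_mem: "X \<in> glue K1 L1 \<phi> K2 \<longleftrightarrow>
   (\<exists>\<rho>\<in>K1. X = glue_map L1 \<phi> ` Inl ` \<rho>) \<or> (\<exists>\<tau>\<in>K2. X = Inr ` \<tau>)"
  by (auto simp: glue_def)

lemma gL: "glue_map L1 \<phi> (Inl x) = (if x \<in> vertices L1 then Inr (\<phi> x) else Inl x)"
  by (simp add: glue_map_def)

lemma closed: "simplicial_complex K \<Longrightarrow> \<sigma> \<in> K \<Longrightarrow> \<tau> \<subseteq> \<sigma> \<Longrightarrow> \<tau> \<noteq> {} \<Longrightarrow> \<tau> \<in> K"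
  unfolding simplicial_complex_def by blast

lemma flagD: "flag_complex K \<Longrightarrow> finite S \<Longrightarrow> S \<noteq> {} \<Longrightarrow> S \<subseteq> vertices K \<Longrightarrow>
   (\<forall>u\<in>S. \<forall>v\<in>S. u \<noteq> v \<longrightarrow> {u, v} \<in> K) \<Longrightarrow> S \<in> K"
  unfolding flag_complex_def by blast

context
  fixes K1 L1 :: "'a set set" and K2 :: "'b set set" and \<phi> :: "'a \<Rightarrow> 'b"
  assumes f1: "flag_complex K1" and f2: "flag_complex K2"
    and fu: "full_subcomplex L1 K1"
    and em: "simplicial_embedding \<phi> L1 K2"
    and H: "\<And>b b'. {b,b'} \<in> K2 \<Longrightarrow> b \<noteq> b' \<Longrightarrow> b \<in> \<phi> ` vertices L1 \<Longrightarrow> b' \<in> \<phi> ` vertices L1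
              \<Longrightarrow> {b,b'} \<in> cimage \<phi> L1"
begin

lemma sc1: "simplicial_complex K1" using f1 by (simp add: flag_complex_def)
lemma sc2: "simplicial_complex K2" using f2 by (simp add: flag_complex_def)
lemma L1K1: "L1 \<subseteq> K1" using fu by (simp add: full_subcomplex_def subcomplex_def)
lemma scL: "simplicial_complex L1" using fu by (simp add: full_subcomplex_def subcomplex_def)
lemma fullL: "\<rho> \<in> K1 \<Longrightarrow> \<rho> \<subseteq> vertices L1 \<Longrightarrow> \<rho> \<in> L1"
  using fu by (simp add: full_subcomplex_def)
lemma injV: "inj_on \<phi> (vertices L1)" using em by (simp add: simplicial_embedding_def)
lemma imK2: "\<sigma> \<in> L1 \<Longrightarrow> \<phi> ` \<sigma> \<in> K2" using em by (simp add: simplicial_embedding_def)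


lemma V1K1: "vertices L1 \<subseteq> vertices K1"
  using L1K1 by (auto simp: vertices_def)

lemma edgeRR:
  assumes "{Inr b, Inr b'} \<in> glue K1 L1 \<phi> K2"
  shows "{b,b'} \<in> K2"
proof -
  from assms[unfolded glue_mem] show ?thesis
  proof
    assume "\<exists>\<rho>\<in>K1. {Inr b, Inr b'} = glue_map L1 \<phi> ` Inl ` \<rho>"
    then obtain \<rho> where r: "\<rho> \<in> K1" and e: "{Inr b, Inr b'} = glue_map L1 \<phi> ` Inl ` \<rho>" by blast
    have sub: "\<rho> \<subseteq> vertices L1"
    proof
      fix x assume "x \<in> \<rho>"
      then have "glue_map L1 \<phi> (Inl x) \<in> {Inr b, Inr b'}" using e by blast
      then show "x \<in> vertices L1" by (auto simp: gL split: if_splits)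
    qed
    have "glue_map L1 \<phi> ` Inl ` \<rho> = Inr ` \<phi> ` \<rho>"
      using sub by (force simp: gL)
    then have "(Inr :: 'b \<Rightarrow> 'a + 'b) ` {b,b'} = Inr ` (\<phi> ` \<rho>)" using e by simp
    then have "{b,b'} = \<phi> ` \<rho>" by (metis inj_Inr inj_image_eq_iff)
    then show ?thesis using imK2 fullL r sub by metis
  next
    assume "\<exists>\<tau>\<in>K2. {Inr b, Inr b'} = (Inr :: 'b \<Rightarrow> 'a + 'b) ` \<tau>"
    then obtain \<tau> where "\<tau> \<in> K2" "{Inr b, Inr b'} = (Inr :: 'b \<Rightarrow> 'a + 'b) ` \<tau>" by blast
    moreover have "\<tau> = {b,b'}" using calculation(2) by (metis image_empty image_insert inj_Inr inj_image_eq_iff)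
    ultimately show ?thesis by simp
  qed
qed

lemma edgeLR:
  assumes "{Inl a, Inr b} \<in> glue K1 L1 \<phi> K2"
  shows "\<exists>v\<in>vertices L1. b = \<phi> v \<and> {a,v} \<in> K1"
proof -
  have "\<not> (\<exists>\<tau>. {Inl a, Inr b} = (Inr :: 'b \<Rightarrow> 'a + 'b) ` \<tau>)" by auto
  then obtain \<rho> where r: "\<rho> \<in> K1" and e: "{Inl a, Inr b} = glue_map L1 \<phi> ` Inl ` \<rho>"
    using assms[unfolded glue_mem] by blast
  have "Inl a \<in> glue_map L1 \<phi> ` Inl ` \<rho>" using e by blast
  then obtain x where x: "x \<in> \<rho>" "glue_map L1 \<phi> (Inl x) = Inl a"
    by auto
  have "Inr b \<in> glue_map L1 \<phi> ` Inl ` \<rho>" using e by blast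
  then obtain y where y: "y \<in> \<rho>" "glue_map L1 \<phi> (Inl y) = Inr b"
    by auto
  have "x = a" using x by (auto simp: gL split: if_splits)
  moreover have "y \<in> vertices L1" "b = \<phi> y" using y by (auto simp: gL split: if_splits)
  moreover have "{x,y} \<in> K1" using closed[OF sc1 r, of "{x,y}"] x y by blast
  ultimately show ?thesis by blast
qed

lemma edgeLL:
  assumes "{Inl a, Inl a'} \<in> glue K1 L1 \<phi> K2"
  shows "{a,a'} \<in> K1"
proof -
  have "\<not> (\<exists>\<tau>. {Inl a, Inl a'} = (Inr :: 'b \<Rightarrow> 'a + 'b) ` \<tau>)" by auto
  then obtain \<rho> where r: "\<rho> \<in> K1" and e: "{Inl a, Inl a'} = glue_map L1 \<phi> ` Inl ` \<rho>"
    using assms[unfolded glue_mem] by blast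
  have "Inl a \<in> glue_map L1 \<phi> ` Inl ` \<rho>" using e by blast
  then obtain x where x: "x \<in> \<rho>" "glue_map L1 \<phi> (Inl x) = Inl a"
    by auto
  have "Inl a' \<in> glue_map L1 \<phi> ` Inl ` \<rho>" using e by blast
  then obtain y where y: "y \<in> \<rho>" "glue_map L1 \<phi> (Inl y) = Inl a'"
    by auto
  have "x = a" "y = a'" using x y by (auto simp: gL split: if_splits)
  then show ?thesis using closed[OF sc1 r, of "{x,y}"] x y by blast
qed

lemma vertL: "Inl a \<in> vertices (glue K1 L1 \<phi> K2) \<Longrightarrow> a \<in> vertices K1 \<and> a \<notin> vertices L1"
  by (auto simp: vertices_def glue_def gL split: if_splits)

lemma vertR: "Inr b \<in> vertices (glue K1 L1 \<phi> K2) \<Longrightarrow> b \<in> vertices K2"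
proof -
  assume "Inr b \<in> vertices (glue K1 L1 \<phi> K2)"
  then obtain X where X: "X \<in> glue K1 L1 \<phi> K2" "Inr b \<in> X" by (auto simp: vertices_def)
  from X(1)[unfolded glue_mem] show ?thesis
  proof
    assume "\<exists>\<rho>\<in>K1. X = glue_map L1 \<phi> ` Inl ` \<rho>"
    then obtain x where "glue_map L1 \<phi> (Inl x) = Inr b" using X(2) by auto
    then have v: "x \<in> vertices L1" "b = \<phi> x" by (auto simp: gL split: if_splits)
    then obtain \<sigma> where s: "\<sigma> \<in> L1" "x \<in> \<sigma>" by (auto simp: vertices_def)
    have "\<phi> ` \<sigma> \<in> K2" using imK2 s by auto
    then show ?thesis using v s by (auto simp: vertices_def)
  next
    assume "\<exists>\<tau>\<in>K2. X = Inr ` \<tau>"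
    then show ?thesis using X(2) by (auto simp: vertices_def)
  qed
qed

lemma glue_sc: "simplicial_complex (glue K1 L1 \<phi> K2)"
  unfolding simplicial_complex_def
proof (rule conjI; intro ballI allI impI)
  fix X assume X: "X \<in> glue K1 L1 \<phi> K2"
  have a: "\<forall>\<sigma>\<in>K1. finite \<sigma> \<and> \<sigma> \<noteq> {}" using sc1 unfolding simplicial_complex_def by blast
  have b: "\<forall>\<sigma>\<in>K2. finite \<sigma> \<and> \<sigma> \<noteq> {}" using sc2 unfolding simplicial_complex_def by blast
  from X[unfolded glue_mem] show "finite X \<and> X \<noteq> {}" using a b by auto
next
  fix X \<tau> assume X: "X \<in> glue K1 L1 \<phi> K2" and t: "\<tau> \<subseteq> X \<and> \<tau> \<noteq> {}"
  from X[unfolded glue_mem] show "\<tau> \<in> glue K1 L1 \<phi> K2"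
  proof
    assume "\<exists>\<rho>\<in>K1. X = glue_map L1 \<phi> ` Inl ` \<rho>"
    then obtain \<rho> where r: "\<rho> \<in> K1" "X = glue_map L1 \<phi> ` Inl ` \<rho>" by blast
    let ?r = "{x\<in>\<rho>. glue_map L1 \<phi> (Inl x) \<in> \<tau>}"
    have e: "\<tau> = glue_map L1 \<phi> ` Inl ` ?r" using t r by auto
    then have "?r \<noteq> {}" using t by auto
    then have "?r \<in> K1" using closed[OF sc1 r(1)] by auto
    then show ?thesis unfolding glue_mem using e by blast
  next
    assume "\<exists>\<rho>\<in>K2. X = Inr ` \<rho>"
    then obtain \<rho> where r: "\<rho> \<in> K2" "X = Inr ` \<rho>" by blast
    let ?r = "{x\<in>\<rho>. Inr x \<in> \<tau>}"
    have e: "\<tau> = Inr ` ?r" using t r by auto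
    then have "?r \<noteq> {}" using t by auto
    then have "?r \<in> K2" using closed[OF sc2 r(1)] by auto
    then show ?thesis unfolding glue_mem using e by blast
  qed
qed

lemma core: "flag_complex (glue K1 L1 \<phi> K2)"
  unfolding flag_complex_def
proof (intro conjI glue_sc allI impI)
  let ?G = "glue K1 L1 \<phi> K2"
  fix S assume Sa: "finite S \<and> S \<noteq> {} \<and> S \<subseteq> vertices ?G \<and>
          (\<forall>u\<in>S. \<forall>v\<in>S. u \<noteq> v \<longrightarrow> {u, v} \<in> ?G)"
  then have fS: "finite S" and neS: "S \<noteq> {}" and SV: "S \<subseteq> vertices ?G"
    and adj: "\<And>u v. u \<in> S \<Longrightarrow> v \<in> S \<Longrightarrow> u \<noteq> v \<Longrightarrow> {u,v} \<in> ?G" by auto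
  define A where "A = {a. Inl a \<in> S}"
  define B where "B = {b. Inr b \<in> S}"
  have SAB: "S = Inl ` A \<union> Inr ` B"
  proof (rule set_eqI)
    fix x show "x \<in> S \<longleftrightarrow> x \<in> Inl ` A \<union> Inr ` B" unfolding A_def B_def by (cases x) auto
  qed
  have fA: "finite A" unfolding A_def using fS
    by (metis finite_vimageI inj_Inl vimage_def)
  have fB: "finite B" unfolding B_def using fS
    by (metis finite_vimageI inj_Inr vimage_def)
  have BV: "B \<subseteq> vertices K2" using vertR SV unfolding B_def by auto
  show "S \<in> ?G"
  proof (cases "A = {}")
    case True
    then have SB: "S = Inr ` B" using SAB by simp
    have "B \<in> K2"
    proof -
      have "\<forall>u\<in>B. \<forall>v\<in>B. u \<noteq> v \<longrightarrow> {u, v} \<in> K2"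
        using adj edgeRR unfolding B_def by auto
      then show ?thesis using flagD[OF f2 fB _ BV] neS SB by blast
    qed
    then show ?thesis unfolding glue_mem using SB by blast
  next
    case False
    then obtain a0 where a0: "a0 \<in> A" by blast
    have AV: "\<And>a. a \<in> A \<Longrightarrow> a \<in> vertices K1 \<and> a \<notin> vertices L1"
      using vertL SV unfolding A_def by auto
    define \<psi> where "\<psi> = inv_into (vertices L1) \<phi>"
    have LR: "\<And>a b. a \<in> A \<Longrightarrow> b \<in> B \<Longrightarrow> b \<in> \<phi> ` vertices L1 \<and> \<psi> b \<in> vertices L1
                \<and> \<phi> (\<psi> b) = b \<and> {a, \<psi> b} \<in> K1"
    proof -
      fix a b assume ab: "a \<in> A" "b \<in> B"
      then have "{Inl a, Inr b} \<in> ?G" using adj unfolding A_def B_def by auto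
      then obtain v where v: "v \<in> vertices L1" "b = \<phi> v" "{a,v} \<in> K1" using edgeLR by blast
      have "\<psi> b = v" unfolding \<psi>_def using v injV by (simp add: inv_into_f_f)
      then show "b \<in> \<phi> ` vertices L1 \<and> \<psi> b \<in> vertices L1 \<and> \<phi> (\<psi> b) = b \<and> {a, \<psi> b} \<in> K1"
        using v by auto
    qed
    define T where "T = A \<union> \<psi> ` B"
    have TV: "T \<subseteq> vertices K1" unfolding T_def using AV LR a0 V1K1 by blast
    have adjT: "\<forall>u\<in>T. \<forall>v\<in>T. u \<noteq> v \<longrightarrow> {u, v} \<in> K1"
    proof (intro ballI impI)
      fix u v assume u: "u \<in> T" and v: "v \<in> T" and uv: "u \<noteq> v"
      show "{u,v} \<in> K1"
      proof (cases "u \<in> A")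
        case uA: True
        show ?thesis
        proof (cases "v \<in> A")
          case True
          then have "{Inl u, Inl v} \<in> ?G" using adj uA uv unfolding A_def by auto
          then show ?thesis using edgeLL by blast
        next
          case False
          then obtain b where "b \<in> B" "v = \<psi> b" using v unfolding T_def by auto
          then show ?thesis using LR uA by auto
        qed
      next
        case uA: False
        then obtain b where b: "b \<in> B" "u = \<psi> b" using u unfolding T_def by auto
        show ?thesis
        proof (cases "v \<in> A")
          case True
          then show ?thesis using LR b by (metis insert_commute)
        next
          case False
          then obtain b' where b': "b' \<in> B" "v = \<psi> b'" using v unfolding T_def by auto
          have bb: "b \<noteq> b'" using b b' uv by auto
          have "{Inr b, Inr b'} \<in> ?G" using adj b b' bb unfolding B_def by auto
          then have k2: "{b,b'} \<in> K2" by (rule edgeRR)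
          have m: "b \<in> \<phi> ` vertices L1" "b' \<in> \<phi> ` vertices L1" using LR a0 b b' by auto
          obtain \<rho> where r: "\<rho> \<in> L1" "{b,b'} = \<phi> ` \<rho>"
            using H[OF k2 bb m] unfolding cimage_def by auto
          have rV: "\<rho> \<subseteq> vertices L1" using r(1) by (auto simp: vertices_def)
          have "\<psi> b \<in> \<rho>"
          proof -
            obtain x where "x \<in> \<rho>" "b = \<phi> x" using r(2) by (metis imageE insertI1)
            then show ?thesis unfolding \<psi>_def using rV injV by (auto simp: inv_into_f_f)
          qed
          moreover have "\<psi> b' \<in> \<rho>"
          proof -
            obtain x where "x \<in> \<rho>" "b' = \<phi> x" using r(2) by (metis imageE insertI1 insertI2)
            then show ?thesis unfolding \<psi>_def using rV injV by (auto simp: inv_into_f_f)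
          qed
          ultimately show ?thesis using closed[OF sc1, of \<rho> "{u,v}"] r(1) L1K1 b b' by auto
        qed
      qed
    qed
    have "T \<in> K1" using flagD[OF f1 _ _ TV adjT] fA fB a0 unfolding T_def by blast
    moreover have "S = glue_map L1 \<phi> ` Inl ` T"
    proof -
      have "glue_map L1 \<phi> ` Inl ` A = Inl ` A" using AV by (force simp: gL)
      moreover have "glue_map L1 \<phi> ` Inl ` \<psi> ` B = Inr ` B"
      proof -
        have "\<And>b. b \<in> B \<Longrightarrow> glue_map L1 \<phi> (Inl (\<psi> b)) = Inr b" using LR a0 by (simp add: gL)
        then show ?thesis by force
      qed
      ultimately show ?thesis using SAB unfolding T_def by (simp add: image_Un)
    qed
    ultimately show ?thesis unfolding glue_mem by blast
  qed
qed

end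

theorem mainTheorem1:
  fixes K1 L1 :: "'a set set" and K2 :: "'b set set" and \<phi> :: "'a \<Rightarrow> 'b"
  assumes "flag_complex K1" and "flag_complex K2"
    and "L1 \<noteq> {}" and "full_subcomplex L1 K1"
    and "simplicial_embedding \<phi> L1 K2"
  shows "(full_subcomplex (skeleton1 (cimage \<phi> L1)) (skeleton1 K2)
           \<longrightarrow> flag_complex (glue K1 L1 \<phi> K2)) \<and>
         (full_subcomplex (cimage \<phi> L1) K2 \<longrightarrow> flag_complex (glue K1 L1 \<phi> K2))"
proof (intro conjI impI)
  have scL: "simplicial_complex L1" using assms(4) by (simp add: full_subcomplex_def subcomplex_def)
  assume F: "full_subcomplex (skeleton1 (cimage \<phi> L1)) (skeleton1 K2)"
  show "flag_complex (glue K1 L1 \<phi> K2)"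
  proof (rule core[OF assms(1,2,4,5)])
    fix b b' assume k: "{b,b'} \<in> K2" "b \<noteq> b'" "b \<in> \<phi> ` vertices L1" "b' \<in> \<phi> ` vertices L1"
    have vsub: "\<phi> ` vertices L1 \<subseteq> vertices (skeleton1 (cimage \<phi> L1))"
    proof
      fix y assume "y \<in> \<phi> ` vertices L1"
      then obtain x \<sigma> where x: "y = \<phi> x" "\<sigma> \<in> L1" "x \<in> \<sigma>" by (auto simp: vertices_def)
      then have "{x} \<in> L1" using closed[OF scL x(2), of "{x}"] by blast
      then have "\<phi> ` {x} \<in> cimage \<phi> L1" unfolding cimage_def by (rule imageI)
      then have "{y} \<in> cimage \<phi> L1" using x(1) by simp
      then have "{y} \<in> skeleton1 (cimage \<phi> L1)" unfolding skeleton1_def by simp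
      then show "y \<in> vertices (skeleton1 (cimage \<phi> L1))" by (auto simp: vertices_def)
    qed
    have "{b,b'} \<in> skeleton1 K2" using k by (simp add: skeleton1_def)
    moreover have "\<forall>\<sigma>\<in>skeleton1 K2. \<sigma> \<subseteq> vertices (skeleton1 (cimage \<phi> L1)) \<longrightarrow> \<sigma> \<in> skeleton1 (cimage \<phi> L1)"
      using F unfolding full_subcomplex_def by blast
    moreover have "{b,b'} \<subseteq> vertices (skeleton1 (cimage \<phi> L1))" using vsub k(3,4) by blast
    ultimately have "{b,b'} \<in> skeleton1 (cimage \<phi> L1)" by blast
    then show "{b,b'} \<in> cimage \<phi> L1" by (simp add: skeleton1_def)
  qed
next
  assume F: "full_subcomplex (cimage \<phi> L1) K2"
  show "flag_complex (glue K1 L1 \<phi> K2)"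
  proof (rule core[OF assms(1,2,4,5)])
    fix b b' assume k: "{b,b'} \<in> K2" "b \<noteq> b'" "b \<in> \<phi> ` vertices L1" "b' \<in> \<phi> ` vertices L1"
    have "\<phi> ` vertices L1 \<subseteq> vertices (cimage \<phi> L1)"
      unfolding vertices_def cimage_def by blast
    then have "{b,b'} \<subseteq> vertices (cimage \<phi> L1)" using k(3,4) by blast
    moreover have "\<forall>\<sigma>\<in>K2. \<sigma> \<subseteq> vertices (cimage \<phi> L1) \<longrightarrow> \<sigma> \<in> cimage \<phi> L1"
      using F unfolding full_subcomplex_def by blast
    ultimately show "{b,b'} \<in> cimage \<phi> L1" using k(1) by blast
  qed
qed

end
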